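(* Let $\beta=0$, $R\ge0$, and let $D>0$ be odd. Let $\alpha_\infty^D$ be the maximum value of $\alpha_0$ over all numerical walls for the Chern character $(-R,0,D,0)$ on $\mathbb{P}^3$. Then $D-1<\alpha_\infty^D\le D$.
   Context: On $\mathbb{P}^3$ with hyperplane class $H$, Chern characters are the vectors of coefficients of $1,H,H^2,H^3$. For $v=(-R,0,D,0)$ and the Bayer–Macrì–Toda stability conditions $\sigma_{0,\alpha,s}$ ($\alpha,s>0$; central charge $Z=-(\operatorname{ch}_3-(s+\frac16)\alpha^2\operatorname{ch}_1)+\sqrt{-1}(\operatorname{ch}_2-\frac{\alpha^2}{2}\operatorname{ch}_0)$), a numerical wall is a curve $(s+\frac16)\alpha^2=\alpha_0^2/6$ with $\alpha_0^2=6e/c$, where $(r,c,d,e)=\operatorname{ch}(A)$ for some $A\in D^b(\mathbb{P}^3)$ with $c>0$ satisfying $0<d<D$, $0<c(6e)\le\min\{4d^2,4(D-d)^2\}$, and $-\frac{c(2D-2d)}{6e}-R\le r\le\frac{2cd}{6e}$. *)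

theory Defs
  imports Complex_Main
begin

text \<open>Chern characters (coefficients of 1, H, H^2, H^3) of objects of D^b(P^3).
  K_0(P^3) is freely generated by O, O(1), O(2), O(3), and ch(O(k)) = (1, k, k^2/2, k^3/6),
  so the Chern characters of objects of D^b(P^3) are exactly the integer combinations below.\<close>
definition is_ch_P3 :: "real \<Rightarrow> real \<Rightarrow> real \<Rightarrow> real \<Rightarrow> bool" where
  "is_ch_P3 r c d e \<longleftrightarrow> (\<exists>n0 n1 n2 n3 :: int.
      r = of_int n0 + of_int n1 + of_int n2 + of_int n3 \<and>
      c = of_int n1 + 2 * of_int n2 + 3 * of_int n3 \<and>
      d = (of_int n1 + 4 * of_int n2 + 9 * of_int n3) / 2 \<and>
      e = (of_int n1 + 8 * of_int n2 + 27 * of_int n3) / 6)"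

definition numerical_wall_ch :: "real \<Rightarrow> real \<Rightarrow> real \<Rightarrow> real \<Rightarrow> real \<Rightarrow> real \<Rightarrow> bool" where
  "numerical_wall_ch R D r c d e \<longleftrightarrow>
     is_ch_P3 r c d e \<and> c > 0 \<and> 0 < d \<and> d < D \<and>
     0 < c * (6 * e) \<and> c * (6 * e) \<le> min (4 * d^2) (4 * (D - d)^2) \<and>
     - (c * (2 * D - 2 * d)) / (6 * e) - R \<le> r \<and> r \<le> (2 * c * d) / (6 * e)"

definition wall_alphas :: "real \<Rightarrow> real \<Rightarrow> real set" where
  "wall_alphas R D = {sqrt (6 * e / c) | r c d e. numerical_wall_ch R D r c d e}"

end

theory Submission
  imports Defs
begin

lemma sq_mod6:
  fixes D :: int assumes "odd D"
  shows "D^2 mod 6 = 1 \<or> D^2 mod 6 = 3"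
proof -
  have h: "D^2 mod 6 = ((D mod 6)^2) mod 6" by (simp add: power_mod)
  have "D mod 6 = 1 \<or> D mod 6 = 3 \<or> D mod 6 = 5" using assms by presburger
  then show ?thesis using h by auto
qed

lemma wall_bound:
  fixes R D :: real and r c d e :: real
  assumes w: "numerical_wall_ch R D r c d e"
  obtains C E :: int where "c = of_int C" "6 * e = of_int E" "C \<ge> 1" "E \<ge> 1"
     "C * E \<le> \<lfloor>D^2\<rfloor>" "C = 1 \<Longrightarrow> E mod 6 = 1"
proof -
  from w obtain n0 n1 n2 n3 :: int where
    ch: "c = of_int n1 + 2 * of_int n2 + 3 * of_int n3"
        "e = (of_int n1 + 8 * of_int n2 + 27 * of_int n3) / 6"
    unfolding numerical_wall_ch_def is_ch_P3_def by blast
  define C where "C = n1 + 2*n2 + 3*n3"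
  define E where "E = n1 + 8*n2 + 27*n3"
  have cC: "c = of_int C" using ch by (simp add: C_def)
  have eE: "6 * e = of_int E" using ch by (simp add: E_def)
  from w have c0: "c > 0" and d0: "0 < d" "d < D" and p: "0 < c * (6*e)"
    and b: "c * (6 * e) \<le> min (4 * d^2) (4 * (D - d)^2)"
    unfolding numerical_wall_ch_def by auto
  have C1: "C \<ge> 1" using c0 cC by simp
  have E1: "E \<ge> 1"
  proof -
    have "real_of_int C * of_int E > 0" using p cC eE by simp
    then have "C * E > 0" by (metis of_int_0_less_iff of_int_mult)
    with C1 show ?thesis by (smt (verit) mult_le_0_iff)
  qed
  have mb: "min (4 * d^2) (4 * (D - d)^2) \<le> D^2"
  proof (cases "d \<le> D/2")
    case True
    then have "2*d \<le> D" by simp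
    then have "(2*d)^2 \<le> D^2" using d0 by (intro power_mono) auto
    then show ?thesis by (simp add: power_mult_distrib)
  next
    case False
    then have "2*(D-d) \<le> D" by simp
    then have "(2*(D-d))^2 \<le> D^2" using d0 by (intro power_mono) auto
    moreover have "(2*(D-d))^2 = 4*(D-d)^2" by (simp add: power2_eq_square algebra_simps)
    ultimately show ?thesis by (simp add: min_le_iff_disj)
  qed
  have "c * (6 * e) \<le> D^2" using b mb by linarith
  then have "real_of_int (C*E) \<le> D^2" using cC eE by simp
  then have CE: "C * E \<le> \<lfloor>D^2\<rfloor>" by (simp add: le_floor_iff)
  have "C = 1 \<Longrightarrow> E mod 6 = 1"
  proof -
    assume "C = 1"
    then have "E = 1 + 6*(n2 + 4*n3)" unfolding C_def E_def by simp
    then show "E mod 6 = 1" by presburger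
  qed
  then show ?thesis using that cC eE C1 E1 CE by blast
qed

theorem lemma4p2:
  fixes R D :: int
  assumes "R \<ge> 0" and "D > 0" and "odd D"
  shows "\<exists>a \<in> wall_alphas (real_of_int R) (real_of_int D).
           (\<forall>b \<in> wall_alphas (real_of_int R) (real_of_int D). b \<le> a) \<and>
           real_of_int D - 1 < a \<and> a \<le> real_of_int D"
proof -
  define q where "q = (D^2 - 1) div 6"
  define M where "M = 6*q + 1"
  have Mle: "M \<le> D^2" unfolding M_def q_def by presburger
  have Mge: "M \<ge> D^2 - 2" using sq_mod6[OF assms(3)] unfolding M_def q_def by presburger
  have D1: "D \<ge> 1" using assms by simp
  have "D^2 \<ge> 1" using D1 by (simp add: one_le_power)
  then have M1: "M \<ge> 1" unfolding M_def q_def by presburger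
  have Mmax: "E \<le> M" if "E \<le> D^2" "E mod 6 = 1" for E
    using that unfolding M_def q_def by presburger
  obtain m where m: "D = 2*m + 1" using assms(3) by (metis oddE)
  define n3 where "n3 = q - m"
  define n2 where "n2 = m - 3*n3"
  define n1 where "n1 = 1 - 2*n2 - 3*n3"
  define n0 where "n0 = -(n1+n2+n3)"
  let ?d = "real_of_int D / 2"
  let ?e = "real_of_int M / 6"
  have ch: "is_ch_P3 0 1 ?d ?e"
    unfolding is_ch_P3_def
    apply (rule exI[of _ n0], rule exI[of _ n1], rule exI[of _ n2], rule exI[of _ n3])
    unfolding n0_def n1_def n2_def n3_def M_def m by (simp add: field_simps)
  have Mr: "real_of_int M \<le> real_of_int D ^2" using Mle by (metis of_int_le_iff of_int_power)
  have M1r: "real_of_int M \<ge> 1" using M1 by simp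
  have DM: "real_of_int D / real_of_int M \<ge> 0" using D1 M1 by simp
  have DM2: "- (real_of_int D / real_of_int M) \<le> real_of_int R" using DM assms(1) by simp
  have wall: "numerical_wall_ch (real_of_int R) (real_of_int D) 0 1 ?d ?e"
  proof -
    have a1: "0 < ?d" "?d < real_of_int D" using D1 by auto
    have a2: "0 < 1 * (6 * ?e)" using M1r by simp
    have "4 * ?d^2 = real_of_int D ^ 2" "4 * (real_of_int D - ?d)^2 = real_of_int D ^ 2"
      by (simp_all add: power2_eq_square field_simps)
    then have a3: "1 * (6 * ?e) \<le> min (4 * ?d^2) (4 * (real_of_int D - ?d)^2)" using Mr by simp
    have "- (1 * (2 * real_of_int D - 2 * ?d)) / (6 * ?e) = - (real_of_int D / real_of_int M)"
      by simp
    then have a4: "- (1 * (2 * real_of_int D - 2 * ?d)) / (6 * ?e) - real_of_int R \<le> 0"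
      using DM2 by linarith
    have a5: "0 \<le> (2 * 1 * ?d) / (6 * ?e)" using DM by simp
    show ?thesis unfolding numerical_wall_ch_def using ch a1 a2 a3 a4 a5 by (simp only:) simp
  qed
  have a_in: "sqrt (real_of_int M) \<in> wall_alphas (real_of_int R) (real_of_int D)"
    unfolding wall_alphas_def using wall by force
  have ub: "b \<le> sqrt (real_of_int M)" if "b \<in> wall_alphas (real_of_int R) (real_of_int D)" for b
  proof -
    from that obtain r c d e where w: "numerical_wall_ch (real_of_int R) (real_of_int D) r c d e"
      and b: "b = sqrt (6 * e / c)" unfolding wall_alphas_def by blast
    obtain C E where CE: "c = of_int C" "6 * e = of_int E" "C \<ge> 1" "E \<ge> 1"
      "C * E \<le> \<lfloor>(real_of_int D)^2\<rfloor>" "C = 1 \<Longrightarrow> E mod 6 = 1"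
      using wall_bound[OF w] by blast
    have fl: "\<lfloor>(real_of_int D)^2\<rfloor> = D^2" by (metis floor_of_int of_int_power)
    have CE2: "C * E \<le> D^2" using CE(5) fl by simp
    have "real_of_int E / real_of_int C \<le> real_of_int M"
    proof (cases "C = 1")
      case True
      then have "E \<le> M" using Mmax CE2 CE(6) by simp
      then show ?thesis using True by simp
    next
      case False
      then have C2: "C \<ge> 2" using CE(3) by simp
      have "2 * E \<le> C * E" using C2 CE(4) by (simp add: mult_right_mono)
      then have E2: "2 * E \<le> D^2" using CE2 by linarith
      have "D \<noteq> 1" using E2 CE(4) by auto
      then have "D \<ge> 2" using D1 by simp
      then have "D * D \<ge> 2 * 2" by (intro mult_mono) auto
      then have "D^2 \<ge> 4" by (simp add: power2_eq_square)
      then have "E \<le> M" using Mge E2 by linarith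
      moreover have "real_of_int E / real_of_int C \<le> real_of_int E"
        using C2 CE(4) by (simp add: divide_le_eq)
      ultimately show ?thesis by simp
    qed
    then show ?thesis using b CE(1,2) by simp
  qed
  have up: "sqrt (real_of_int M) \<le> real_of_int D"
  proof -
    have "sqrt (real_of_int M) \<le> sqrt (real_of_int D ^ 2)" using Mr by (rule real_sqrt_le_mono)
    also have "\<dots> = real_of_int D" using D1 by simp
    finally show ?thesis .
  qed
  have "(D - 1)^2 < M"
  proof (cases "D = 1")
    case True then show ?thesis using M1 by simp
  next
    case False
    then have "D \<ge> 2" using D1 by simp
    moreover have "(D-1)^2 = D^2 - 2*D + 1" by (simp add: power2_eq_square algebra_simps)
    ultimately show ?thesis using Mge by linarith
  qed
  then have "(real_of_int D - 1)^2 < real_of_int M" by (metis of_int_1 of_int_diff of_int_less_iff of_int_power)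
  then have lo: "real_of_int D - 1 < sqrt (real_of_int M)" by (rule real_less_rsqrt)
  show ?thesis using a_in ub up lo by blast
qed

end
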